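(* Let $n>0$, $a\in\mathbb R$ and $b>0$, and let $f(u)=a(b^2+u^2)^{-n}$. Then $$(f\star f)(u)=\frac{n a^2\kappa_{n+1}}{b^{2n-1}(b^2+u^2)^{n+1}}.$$ Consequently, for $b_0>0$, the family $f_\lambda(u)=a(b_\lambda^2+u^2)^{-n}$ with $$b_\lambda=b_0\left(1-\frac{(2n+1)\kappa_{n+1}a\lambda}{2b_0^{2n+1}}\right)^{1/(2n+1)}$$ solves the flow equation $\frac{d f_\lambda}{d\lambda}=f_\lambda\star f_\lambda$ with $f_0=a(b_0^2+u^2)^{-n}$, for all $\lambda$ for which the bracket is positive.
   Context: For suitable real functions $f$ on $\mathbb R$, the star product is $$(f\star f)(u)=\int_{-\infty}^\infty\frac{f(w)f'(u)-f'(w)f(u)}{2\pi(w-u)}\,dw.$$ The constants are $\kappa_m=\int_{-\infty}^\infty\frac{dx}{\pi(1+x^2)^m}=\frac{\Gamma(m-\frac12)}{\Gamma(m)\sqrt\pi}$. *)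

theory Defs
  imports "HOL-Analysis.Analysis"
begin

text \<open>Star product of a real function with itself:
  (f star f)(u) = integral over R of (f(w) f'(u) - f'(w) f(u)) / (2 pi (w - u)) dw.
  The integrand at the single point w = u is irrelevant (null set).\<close>
definition star_self :: "(real \<Rightarrow> real) \<Rightarrow> real \<Rightarrow> real" where
  "star_self f u = integral UNIV (\<lambda>w. (f w * deriv f u - deriv f w * f u) / (2 * pi * (w - u)))"

definition kappa :: "real \<Rightarrow> real" where
  "kappa m = integral UNIV (\<lambda>x. 1 / (pi * (1 + x\<^sup>2) powr m))"

end

theory Submission imports Defs "HOL-Probability.Sinc_Integral" begin


lemma int_inv: "integrable lborel (\<lambda>x::real. inverse (1 + x^2))"
  using integrable_inverse_1_plus_square by (simp add: set_integrable_def)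

lemma int_K:
  fixes p :: real assumes "p \<ge> 1"
  shows "integrable lborel (\<lambda>x::real. (1 + x^2) powr (-p))"
proof (rule Bochner_Integration.integrable_bound[OF int_inv])
  show "(\<lambda>x::real. (1 + x^2) powr (-p)) \<in> borel_measurable lborel" by measurable
  show "AE x in lborel. norm ((1 + x^2) powr (-p)) \<le> norm (inverse (1 + (x::real)^2))"
  proof (rule AE_I2)
    fix x :: real
    have "(1 + x^2) powr (-p) \<le> (1 + x^2) powr (-1)"
      by (rule powr_mono) (use assms in auto)
    then show "norm ((1 + x^2) powr (-p)) \<le> norm (inverse (1 + x^2))"
      by (simp add: powr_minus_divide divide_inverse add_pos_nonneg)
  qed
qed

lemma int_H:
  fixes p b :: real assumes "p \<ge> 1" "b > 0"
  shows "integrable lborel (\<lambda>w::real. (b^2 + w^2) powr (-p))"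
    "(LINT w|lborel. (b^2 + w^2) powr (-p)) = b powr (1 - 2*p) * (LINT x|lborel. (1 + x^2) powr (-p))"
proof -
  have eq: "(b^2 + (0 + b*x)^2) powr (-p) = b powr (-2*p) * (1 + x^2) powr (-p)" for x
  proof -
    have "(b^2 + (0 + b*x)^2) = b^2 * (1+x^2)" by (simp add: algebra_simps power_mult_distrib)
    hence "(b^2 + (0 + b*x)^2) powr (-p) = (b^2) powr (-p) * (1 + x^2) powr (-p)"
      by (simp add: powr_mult add_pos_nonneg)
    moreover have "(b^2) powr (-p) = b powr (-2*p)"
    proof -
      have "b^2 = b powr 2" using assms by (simp add: powr_numeral)
      hence "(b^2) powr (-p) = b powr (2 * (-p))" by (simp only: powr_powr)
      thus ?thesis by simp
    qed
    ultimately show ?thesis by simp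
  qed
  have i1: "integrable lborel (\<lambda>x. (b^2 + (0 + b*x)^2) powr (-p))"
    unfolding eq using int_K[OF assms(1)] by simp
  show "integrable lborel (\<lambda>w::real. (b^2 + w^2) powr (-p))"
    using i1 lborel_integrable_real_affine_iff[of b "\<lambda>w. (b^2 + w^2) powr (-p)" 0] assms by simp
  have "(LINT w|lborel. (b^2 + w^2) powr (-p)) = \<bar>b\<bar> *\<^sub>R (LINT x|lborel. (b^2 + (0 + b*x)^2) powr (-p))"
    by (rule lborel_integral_real_affine) (use assms in auto)
  also have "\<dots> = b * (b powr (-2*p) * (LINT x|lborel. (1 + x^2) powr (-p)))"
    unfolding eq using assms by simp
  also have "\<dots> = b powr (1 - 2*p) * (LINT x|lborel. (1 + x^2) powr (-p))"
    using assms by (simp add: powr_add powr_diff powr_minus field_simps)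
  finally show "(LINT w|lborel. (b^2 + w^2) powr (-p)) = b powr (1 - 2*p) * (LINT x|lborel. (1 + x^2) powr (-p))" .
qed


lemma deriv_P:
  fixes b n :: real assumes "b > 0"
  shows "((\<lambda>w. (b^2 + w^2) powr (-n)) has_real_derivative (-n) * (b^2 + x^2) powr (-n-1) * (2*x)) (at x)"
proof -
  have pos: "b^2 + x^2 > 0" using assms by (simp add: add_pos_nonneg)
  have "((\<lambda>w. (b^2 + w^2) powr (-n)) has_real_derivative (-n) * (b^2 + x^2) powr (-n - 1) * (2 * x ^ 1 * 1)) (at x)"
    using pos by (intro derivative_eq_intros) auto
  thus ?thesis by simp
qed

lemma int_G:
  fixes b n :: real assumes "b > 0" "n > 0"
  shows "integrable lborel (\<lambda>w::real. w * (b^2 + w^2) powr (-n-1))"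
    "(LINT w|lborel. w * (b^2 + w^2) powr (-n-1)) = 0"
proof -
  define g where "g = (\<lambda>w::real. w * (b^2 + w^2) powr (-n-1))"
  define c where "c = (b^2) powr (-n) / (2*n)"
  have pos: "\<And>x. b^2 + x^2 > 0" using assms by (simp add: add_pos_nonneg)
  have dF: "((\<lambda>w. - ((b^2 + w^2) powr (-n)) / (2*n)) has_real_derivative g x) (at x)" for x
    using deriv_P[OF assms(1), of n x] assms(2) pos[of x]
    by (auto intro!: derivative_eq_intros simp: g_def field_simps)
  have dF2: "((\<lambda>w. (b^2 + w^2) powr (-n) / (2*n)) has_real_derivative - g x) (at x)" for x
    using deriv_P[OF assms(1), of n x] assms(2) pos[of x]
    by (auto intro!: derivative_eq_intros simp: g_def field_simps)
  have cont: "isCont g x" for x unfolding g_def using pos[of x] by (intro continuous_intros) auto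
  have top: "((\<lambda>w. (b^2 + w^2) powr (-n)) \<longlongrightarrow> 0) at_top"
    by (rule tendsto_neg_powr) (use assms in \<open>auto intro!: filterlim_tendsto_add_at_top[OF tendsto_const] filterlim_pow_at_top filterlim_ident\<close>)
  have bot: "((\<lambda>w. (b^2 + w^2) powr (-n)) \<longlongrightarrow> 0) at_bot"
    by (rule tendsto_neg_powr) (use assms in \<open>auto intro!: filterlim_tendsto_add_at_top[OF tendsto_const] filterlim_pow_at_bot_even filterlim_ident\<close>)
  have at0: "((\<lambda>w. (b^2 + w^2) powr (-n)) \<longlongrightarrow> (b^2) powr (-n)) (at (0::real))"
    using pos[of 0] by (intro tendsto_eq_intros) auto
  have atR: "((\<lambda>w. (b^2 + w^2) powr (-n)) \<longlongrightarrow> (b^2) powr (-n)) (at_right (0::real))"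
    by (rule tendsto_mono[OF at_le[OF subset_UNIV] at0])
  have atL: "((\<lambda>w. (b^2 + w^2) powr (-n)) \<longlongrightarrow> (b^2) powr (-n)) (at_left (0::real))"
    by (rule tendsto_mono[OF at_le[OF subset_UNIV] at0])
  have R: "set_integrable lborel (einterval 0 \<infinity>) g" "(LBINT x=0..\<infinity>. g x) = 0 - (- c)"
  proof -
    have A: "(((\<lambda>w. - ((b^2 + w^2) powr (-n)) / (2*n)) \<circ> real_of_ereal) \<longlongrightarrow> - c) (at_right 0)"
      unfolding zero_ereal_def ereal_tendsto_simps c_def
      using tendsto_divide[OF tendsto_minus[OF atR] tendsto_const, of "2*n"] assms by simp
    have B: "(((\<lambda>w. - ((b^2 + w^2) powr (-n)) / (2*n)) \<circ> real_of_ereal) \<longlongrightarrow> 0) (at_left \<infinity>)"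
      unfolding ereal_tendsto_simps using tendsto_divide[OF tendsto_minus[OF top] tendsto_const, of "2*n"] assms by simp
    have nn: "AE x in lborel. 0 < ereal x \<longrightarrow> ereal x < \<infinity> \<longrightarrow> 0 \<le> g x"
      unfolding g_def by (intro AE_I2) auto
    show "set_integrable lborel (einterval 0 \<infinity>) g" "(LBINT x=0..\<infinity>. g x) = 0 - (- c)"
      using interval_integral_FTC_nonneg[where F="\<lambda>w. - ((b^2 + w^2) powr (-n)) / (2*n)" and f=g and a=0 and b=\<infinity>, OF _ dF cont nn A B]
      by auto
  qed
  have L: "set_integrable lborel (einterval (-\<infinity>) 0) (\<lambda>x. - g x)" "(LBINT x=-\<infinity>..0. - g x) = c - 0"
  proof -
    have B: "(((\<lambda>w. (b^2 + w^2) powr (-n) / (2*n)) \<circ> real_of_ereal) \<longlongrightarrow> c) (at_left 0)"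
      unfolding zero_ereal_def ereal_tendsto_simps c_def
      using tendsto_divide[OF atL tendsto_const, of "2*n"] assms by simp
    have A: "(((\<lambda>w. (b^2 + w^2) powr (-n) / (2*n)) \<circ> real_of_ereal) \<longlongrightarrow> 0) (at_right (-\<infinity>))"
      unfolding ereal_tendsto_simps using tendsto_divide[OF bot tendsto_const, of "2*n"] assms by simp
    have nn: "AE x in lborel. -\<infinity> < ereal x \<longrightarrow> ereal x < 0 \<longrightarrow> 0 \<le> - g x"
      unfolding g_def by (intro AE_I2) (auto simp: mult_nonpos_nonneg)
    show "set_integrable lborel (einterval (-\<infinity>) 0) (\<lambda>x. - g x)" "(LBINT x=-\<infinity>..0. - g x) = c - 0"
      using interval_integral_FTC_nonneg[where F="\<lambda>w. (b^2 + w^2) powr (-n) / (2*n)" and f="\<lambda>x. - g x" and a="-\<infinity>" and b=0, OF _ dF2 _ nn A B] cont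
      by auto
  qed
  have R1: "integrable lborel (\<lambda>x. indicator {0<..} x *\<^sub>R g x)"
    using R(1) by (simp add: set_integrable_def zero_ereal_def)
  have R2: "(LINT x|lborel. indicator {0<..} x *\<^sub>R g x) = c"
    using R(2) by (simp add: interval_lebesgue_integral_def set_lebesgue_integral_def zero_ereal_def)
  have L1': "integrable lborel (\<lambda>x. indicator {..<0} x *\<^sub>R (- g x))"
    using L(1) by (simp add: set_integrable_def zero_ereal_def)
  have L1: "integrable lborel (\<lambda>x. indicator {..<0} x *\<^sub>R g x)"
    using integrable_minus[OF L1'] by simp
  have L2': "(LINT x|lborel. indicator {..<0} x *\<^sub>R (- g x)) = c"
    using L(2) by (simp add: interval_lebesgue_integral_def set_lebesgue_integral_def zero_ereal_def)
  have L2: "(LINT x|lborel. indicator {..<0} x *\<^sub>R g x) = - c"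
    using L2' Bochner_Integration.integral_minus[of lborel "\<lambda>x. indicator {..<0} x *\<^sub>R g x"] by simp
  have split: "g = (\<lambda>x. indicator {0<..} x *\<^sub>R g x + indicator {..<0} x *\<^sub>R g x)"
    by (rule ext) (auto simp: g_def indicator_def)
  show "integrable lborel (\<lambda>w::real. w * (b^2 + w^2) powr (-n-1))"
  proof -
    have "integrable lborel g" by (subst split) (rule Bochner_Integration.integrable_add[OF R1 L1])
    thus ?thesis by (simp add: g_def)
  qed
  have "(LINT x|lborel. g x) = c + - c"
    by (subst split, subst Bochner_Integration.integral_add[OF R1 L1]) (use R2 L2 in simp)
  thus "(LINT w|lborel. w * (b^2 + w^2) powr (-n-1)) = 0" by (simp add: g_def)
qed


lemma powr_split: "x > 0 \<Longrightarrow> x powr (-n) = x * x powr (-n-1)" for x n :: real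
proof -
  assume x: "x > 0"
  have "x powr (1 + (-n-1)) = x powr 1 * x powr (-n-1)" by (rule powr_add)
  moreover have "1 + (-n-1) = -n" by simp
  moreover have "x powr 1 = x" using x by (simp add: powr_one)
  ultimately show ?thesis by metis
qed

lemma alg: "w \<noteq> u \<Longrightarrow> (a * ((b^2+w^2) * q) * (a * ((-n) * r * (2*u))) - a * ((-n) * q * (2*w)) * (a * ((b^2+u^2) * r))) / (2*pi*(w-u))
   = n*a^2/pi * r * (b^2 * q - u * (w * q))" for a b w u q r n :: real
proof -
  assume "w \<noteq> u"
  hence wu: "w - u \<noteq> 0" by simp
  have eq: "(a * ((b^2+w^2) * q) * (a * ((-n) * r * (2*u))) - a * ((-n) * q * (2*w)) * (a * ((b^2+u^2) * r)))
      = (2*(w-u)) * (n*a^2 * r * (b^2 * q - u * (w * q)))" by (simp add: power2_eq_square; algebra)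
  have "(a * ((b^2+w^2) * q) * (a * ((-n) * r * (2*u))) - a * ((-n) * q * (2*w)) * (a * ((b^2+u^2) * r))) / (2*pi*(w-u))
     = (2*(w-u)) * (n*a^2 * r * (b^2 * q - u * (w * q))) / (2*pi*(w-u))" by (subst eq) (rule refl)
  also have "\<dots> = (2*(w-u)) * (n*a^2 * r * (b^2 * q - u * (w * q))) / ((2*(w-u)) * pi)"
    by (simp add: mult_ac)
  also have "\<dots> = (n*a^2 * r * (b^2 * q - u * (w * q))) / pi"
    by (rule mult_divide_mult_cancel_left) (use wu in simp)
  also have "\<dots> = n*a^2/pi * r * (b^2 * q - u * (w * q))" by simp
  finally show ?thesis .
qed

lemma star_formula:
  fixes n a b u :: real assumes n: "n > 0" and b: "b > 0"
  shows "star_self (\<lambda>x. a * (b^2 + x^2) powr (-n)) u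
     = n * a^2 * kappa (n + 1) / (b powr (2 * n - 1) * (b^2 + u^2) powr (n + 1))"
proof -
  define P where "P = (\<lambda>x::real. b^2 + x^2)"
  have Ppos: "P x > 0" for x using b by (simp add: P_def add_pos_nonneg)
  define K where "K = (LINT x|lborel. (1 + x^2) powr (-(n+1)))"
  have intK: "integrable lborel (\<lambda>x::real. (1 + x^2) powr (-(n+1)))"
    by (rule int_K) (use n in simp)
  have kap: "kappa (n+1) = K / pi"
  proof -
    have "kappa (n+1) = integral UNIV (\<lambda>x. (1 + x^2) powr (-(n+1)) / pi)"
      unfolding kappa_def
    proof (rule arg_cong[where f="integral UNIV"], rule ext)
      fix x :: real
      have "(1 + x^2) powr (-(n+1)) = 1 / (1 + x^2) powr (n+1)" by (rule powr_minus_divide)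
      thus "1 / (pi * (1 + x^2) powr (n + 1)) = (1 + x^2) powr (-(n+1)) / pi" by simp
    qed
    also have "\<dots> = (LINT x|lborel. (1 + x^2) powr (-(n+1)) / pi)"
      by (rule integral_lborel) (use intK in simp)
    also have "\<dots> = K / pi" unfolding K_def by simp
    finally show ?thesis .
  qed
  have dv: "deriv (\<lambda>x. a * (b^2 + x^2) powr (-n)) x = a * ((-n) * (b^2 + x^2) powr (-n-1) * (2*x))" for x
    by (rule DERIV_imp_deriv, rule DERIV_cmult, rule deriv_P[OF b])
  define C where "C = n * a^2 / pi * P u powr (-n-1)"
  define T where "T = (\<lambda>w. C * (b^2 * P w powr (-n-1) - u * (w * P w powr (-n-1))))"
  have ST: "(a * (b^2 + w^2) powr (-n) * deriv (\<lambda>x. a * (b^2 + x^2) powr (-n)) u -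
             deriv (\<lambda>x. a * (b^2 + x^2) powr (-n)) w * (a * (b^2 + u^2) powr (-n))) / (2 * pi * (w - u)) = T w"
    if "w \<noteq> u" for w
  proof -
    have pw: "b^2 + w^2 > 0" "b^2 + u^2 > 0" using Ppos[of w] Ppos[of u] by (simp_all add: P_def)
    show ?thesis
      unfolding dv powr_split[OF pw(1)] powr_split[OF pw(2)] T_def C_def P_def by (rule alg[OF that])
  qed
  have hI: "integrable lborel (\<lambda>w. P w powr (-n-1))"
    "(LINT w|lborel. P w powr (-n-1)) = b powr (1 - 2*(n+1)) * K"
  proof -
    have e: "(\<lambda>w. P w powr (-n-1)) = (\<lambda>w. (b^2+w^2) powr (-(n+1)))"
      by (rule ext) (simp add: P_def)
    have h1: "1 \<le> n + 1" using n by simp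
    show "integrable lborel (\<lambda>w. P w powr (-n-1))" unfolding e by (rule int_H(1)[OF h1 b])
    show "(LINT w|lborel. P w powr (-n-1)) = b powr (1 - 2*(n+1)) * K" unfolding e K_def by (rule int_H(2)[OF h1 b])
  qed
  have gI: "integrable lborel (\<lambda>w. w * P w powr (-n-1))"
    "(LINT w|lborel. w * P w powr (-n-1)) = 0"
    unfolding P_def by (rule int_G[OF b n])+
  have TI: "integrable lborel T" unfolding T_def using hI(1) gI(1) by simp
  have TV: "(LINT w|lborel. T w) = C * (b^2 * (b powr (1 - 2*(n+1)) * K))"
    unfolding T_def using hI gI by simp
  have "star_self (\<lambda>x. a * (b^2 + x^2) powr (-n)) u = integral UNIV T"
    unfolding star_self_def
  proof (rule integral_spike[of "{u}"])
    show "negligible {u}" by simp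
    fix w assume "w \<in> UNIV - {u}"
    hence "w \<noteq> u" by simp
    from ST[OF this] show "T w = (a * (b^2 + w^2) powr (-n) * deriv (\<lambda>x. a * (b^2 + x^2) powr (-n)) u -
             deriv (\<lambda>x. a * (b^2 + x^2) powr (-n)) w * (a * (b^2 + u^2) powr (-n))) / (2 * pi * (w - u))" by simp
  qed
  also have "\<dots> = C * (b^2 * (b powr (1 - 2*(n+1)) * K))"
    using integral_lborel[OF TI] TV by simp
  also have "\<dots> = n * a^2 * kappa (n + 1) / (b powr (2 * n - 1) * (b^2 + u^2) powr (n + 1))"
  proof -
    have e1: "b^2 * b powr (1 - 2*(n+1)) = 1 / b powr (2*n - 1)"
    proof -
      have "b^2 * b powr (1 - 2*(n+1)) = b powr (2 + (1 - 2*(n+1)))"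
      proof -
        have "b powr (2 + (1 - 2*(n+1))) = b powr 2 * b powr (1 - 2*(n+1))" by (rule powr_add)
        moreover have "b powr 2 = b^2" using b by (simp add: powr_numeral)
        ultimately show ?thesis by simp
      qed
      also have "2 + (1 - 2*(n+1)) = -(2*n - 1)" by simp
      also have "b powr (-(2*n - 1)) = 1 / b powr (2*n - 1)" by (rule powr_minus_divide)
      finally show ?thesis .
    qed
    have e2: "P u powr (-n-1) = 1 / (b^2 + u^2) powr (n+1)"
    proof -
      have "-n-1 = -(n+1)" by simp
      hence "P u powr (-n-1) = P u powr (-(n+1))" by metis
      also have "\<dots> = 1 / P u powr (n+1)" by (rule powr_minus_divide)
      finally show ?thesis by (simp add: P_def)
    qed
    have e3: "b^2 * (b powr (1 - 2*(n+1)) * K) = K / b powr (2*n-1)"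
      by (subst mult.assoc[symmetric], subst e1) simp
    show ?thesis unfolding C_def kap e2 e3 by simp
  qed
  finally show ?thesis .
qed


lemma deriv_Q:
  fixes y c n :: real assumes "y > 0"
  shows "((\<lambda>y. (y^2 + c^2) powr (-n)) has_real_derivative (-n) * (y^2 + c^2) powr (-n-1) * (2*y)) (at y)"
proof -
  have pos: "y^2 + c^2 > 0" using assms by (simp add: add_pos_nonneg)
  have "((\<lambda>y. (y^2 + c^2) powr (-n)) has_real_derivative (-n) * (y^2 + c^2) powr (-n - 1) * (2 * y ^ 1 * 1 + 0)) (at y)"
    using pos by (intro derivative_eq_intros) auto
  thus ?thesis by simp
qed

lemma deriv_G:
  fixes b0 c D e l :: real assumes "0 < 1 - c*l/D" "D \<noteq> 0"
  shows "((\<lambda>m. b0 * (1 - c*m/D) powr e) has_real_derivative b0 * (e * (1 - c*l/D) powr (e-1) * (-(c/D)))) (at l)"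
proof -
  have "((\<lambda>m. b0 * (1 - c*m/D) powr e) has_real_derivative b0 * (e * (1 - c*l/D) powr (e-1) * (0 - c * 1 / D))) (at l)"
    using assms by (intro derivative_eq_intros) auto
  thus ?thesis by simp
qed

lemma key_alg:
  fixes b0 G e n k a :: real
  assumes b0: "b0 > 0" and G: "G > 0" and n: "n > 0" and e: "e = 1 / (2*n+1)"
  shows "-2 * (b0 * G powr e) * (b0 * (e * G powr (e-1) * (-((2*n+1)*k*a / (2 * b0 powr (2*n+1))))))
          * (b0 * G powr e) powr (2*n-1) = a * k"
proof -
  have f1: "b0^2 * b0 powr (2*n-1) = b0 powr (2*n+1)"
  proof -
    have "b0 powr (2 + (2*n-1)) = b0 powr 2 * b0 powr (2*n-1)" by (rule powr_add)
    moreover have "b0 powr 2 = b0^2" using b0 by (simp add: powr_numeral)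
    moreover have "2 + (2*n-1) = 2*n+1" by simp
    ultimately show ?thesis by metis
  qed
  have f2: "G powr e * G powr (e-1) * G powr (e*(2*n-1)) = 1"
  proof -
    have "G powr e * G powr (e-1) * G powr (e*(2*n-1)) = G powr (e + (e-1) + e*(2*n-1))"
      by (simp only: powr_add[symmetric])
    also have "e + (e-1) + e*(2*n-1) = e*(2*n+1) - 1" by (simp add: algebra_simps)
    also have "e*(2*n+1) = 1" using n e by simp
    finally show ?thesis using G by simp
  qed
  have f3: "(b0 * G powr e) powr (2*n-1) = b0 powr (2*n-1) * G powr (e*(2*n-1))"
    using b0 G by (simp add: powr_mult powr_powr)
  have ee: "e * (2*n+1) = 1" using n e by simp
  have P: "b0 powr (2*n+1) > 0" using b0 by simp
  have "-2 * (b0 * G powr e) * (b0 * (e * G powr (e-1) * (-((2*n+1)*k*a / (2 * b0 powr (2*n+1))))))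
          * (b0 * G powr e) powr (2*n-1)
      = (e * (2*n+1)) * k * a * ((b0^2 * b0 powr (2*n-1)) / b0 powr (2*n+1))
          * (G powr e * G powr (e-1) * G powr (e*(2*n-1)))"
    unfolding f3 using P by (simp add: field_simps power2_eq_square)
  also have "\<dots> = a * k" unfolding ee f1 f2 using P by simp
  finally show ?thesis .
qed

theorem mainTheorem7:
  fixes n a :: real
  assumes "n > 0"
  shows "(\<forall>b u. b > 0 \<longrightarrow>
            star_self (\<lambda>x. a * (b\<^sup>2 + x\<^sup>2) powr (-n)) u
              = n * a\<^sup>2 * kappa (n + 1) / (b powr (2 * n - 1) * (b\<^sup>2 + u\<^sup>2) powr (n + 1)))
       \<and> (\<forall>b0. b0 > 0 \<longrightarrow>
            (let bl = (\<lambda>l. b0 * (1 - (2 * n + 1) * kappa (n + 1) * a * l / (2 * b0 powr (2 * n + 1)))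
                                 powr (1 / (2 * n + 1)));
                 fl = (\<lambda>l x. a * ((bl l)\<^sup>2 + x\<^sup>2) powr (-n))
             in (\<forall>x. fl 0 x = a * (b0\<^sup>2 + x\<^sup>2) powr (-n))
              \<and> (\<forall>l u. 1 - (2 * n + 1) * kappa (n + 1) * a * l / (2 * b0 powr (2 * n + 1)) > 0 \<longrightarrow>
                   ((\<lambda>m. fl m u) has_real_derivative star_self (fl l) u) (at l))))"
proof (intro conjI allI impI)
  fix b u :: real assume "b > 0"
  thus "star_self (\<lambda>x. a * (b\<^sup>2 + x\<^sup>2) powr (-n)) u
              = n * a\<^sup>2 * kappa (n + 1) / (b powr (2 * n - 1) * (b\<^sup>2 + u\<^sup>2) powr (n + 1))"
    by (rule star_formula[OF assms])
next
  fix b0 :: real assume b0: "b0 > 0"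
  define D where "D = 2 * b0 powr (2 * n + 1)"
  define c where "c = (2 * n + 1) * kappa (n + 1) * a"
  define e where "e = 1 / (2 * n + 1)"
  have Dpos: "D > 0" using b0 by (simp add: D_def)
  show "let bl = (\<lambda>l. b0 * (1 - (2 * n + 1) * kappa (n + 1) * a * l / (2 * b0 powr (2 * n + 1)))
                                 powr (1 / (2 * n + 1)));
                 fl = (\<lambda>l x. a * ((bl l)\<^sup>2 + x\<^sup>2) powr (-n))
             in (\<forall>x. fl 0 x = a * (b0\<^sup>2 + x\<^sup>2) powr (-n))
              \<and> (\<forall>l u. 1 - (2 * n + 1) * kappa (n + 1) * a * l / (2 * b0 powr (2 * n + 1)) > 0 \<longrightarrow>
                   ((\<lambda>m. fl m u) has_real_derivative star_self (fl l) u) (at l))"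
    unfolding Let_def D_def[symmetric] c_def[symmetric] e_def[symmetric]
  proof (intro conjI allI impI)
    fix x show "a * ((b0 * (1 - c * 0 / D) powr e)\<^sup>2 + x\<^sup>2) powr - n = a * (b0\<^sup>2 + x\<^sup>2) powr - n"
      by simp
  next
    fix l u :: real assume G: "0 < 1 - c * l / D"
    define B where "B = b0 * (1 - c * l / D) powr e"
    define B' where "B' = b0 * (e * (1 - c*l/D) powr (e-1) * (-(c/D)))"
    have "(1 - c * l / D) powr e > 0" using G by (simp only: powr_gt_zero)
    hence Bpos: "B > 0" unfolding B_def by (rule mult_pos_pos[OF b0])
    have dB: "((\<lambda>m. b0 * (1 - c*m/D) powr e) has_real_derivative B') (at l)"
      unfolding B'_def by (rule deriv_G[OF G]) (use Dpos in simp)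
    have dQ: "((\<lambda>y. (y^2 + u^2) powr (-n)) has_real_derivative (-n) * (B^2 + u^2) powr (-n-1) * (2*B)) (at (b0 * (1 - c*l/D) powr e))"
      using deriv_Q[OF Bpos, of u n] by (simp add: B_def)
    have dF: "((\<lambda>m. a * ((b0 * (1 - c * m / D) powr e)\<^sup>2 + u\<^sup>2) powr - n) has_real_derivative
              a * ((-n) * (B^2 + u^2) powr (-n-1) * (2*B) * B')) (at l)"
      by (rule DERIV_cmult, rule DERIV_chain2[OF dQ dB])
    have sf: "star_self (\<lambda>x. a * ((b0 * (1 - c * l / D) powr e)\<^sup>2 + x\<^sup>2) powr - n) u
       = n * a\<^sup>2 * kappa (n + 1) / (B powr (2 * n - 1) * (B\<^sup>2 + u\<^sup>2) powr (n + 1))"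
      unfolding B_def[symmetric] by (rule star_formula[OF assms Bpos])
    have key: "-2 * B * B' * B powr (2*n-1) = a * kappa (n+1)"
      unfolding B_def B'_def c_def D_def e_def
      by (rule key_alg[OF b0 _ assms refl]) (use G in \<open>simp add: c_def D_def\<close>)
    have e2: "(B^2 + u^2) powr (-n-1) = 1 / (B^2 + u^2) powr (n+1)"
    proof -
      have "-n-1 = -(n+1)" by simp
      hence "(B^2 + u^2) powr (-n-1) = (B^2 + u^2) powr (-(n+1))" by metis
      also have "\<dots> = 1 / (B^2 + u^2) powr (n+1)" by (rule powr_minus_divide)
      finally show ?thesis .
    qed
    have Qpos: "(B^2 + u^2) powr (n+1) > 0" using Bpos by (simp add: add_pos_nonneg)
    have Bp: "B powr (2*n-1) > 0" using Bpos by simp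
    have val: "a * ((-n) * (B^2 + u^2) powr (-n-1) * (2*B) * B') = star_self (\<lambda>x. a * ((b0 * (1 - c * l / D) powr e)\<^sup>2 + x\<^sup>2) powr - n) u"
    proof -
      have "a * ((-n) * (B^2 + u^2) powr (-n-1) * (2*B) * B') = a * n * (-2 * B * B' * B powr (2*n-1)) / (B powr (2*n-1) * (B^2 + u^2) powr (n+1))"
        unfolding e2 using Qpos Bp by (simp add: field_simps)
      also have "\<dots> = n * a\<^sup>2 * kappa (n + 1) / (B powr (2 * n - 1) * (B\<^sup>2 + u\<^sup>2) powr (n + 1))"
        unfolding key by (simp add: power2_eq_square mult_ac)
      finally show ?thesis using sf by simp
    qed
    show "((\<lambda>m. a * ((b0 * (1 - c * m / D) powr e)\<^sup>2 + u\<^sup>2) powr - n) has_real_derivative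
          star_self (\<lambda>x. a * ((b0 * (1 - c * l / D) powr e)\<^sup>2 + x\<^sup>2) powr - n) u) (at l)"
      using dF unfolding val .
  qed
qed


end
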